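(* In the weighted picking sequence algorithm, for every step $s\in\{0,1,\ldots,m\}$ and all agents $i,j\in N$, $\left|\frac{t_i(s)}{w_i}-\frac{t_j(s)}{w_j}\right|\le\frac{1}{\min(w_i,w_j)}$. Moreover, for every step $s$ and every $i\in N$, $\left|t_i(s)-\frac{w_i}{W}\cdot s\right|\le\frac{w_i}{w_{\min}}$.
   Context: Agents $N=[n]$ with positive weights $w_i$, $W=\sum_iw_i$, $w_{\min}=\min_iw_i$; items $M=[m]$ with additive utilities. Weighted picking sequence algorithm: while items remain, an agent $i^*$ minimizing $t_i/w_i$ (ties broken arbitrarily), where $t_i$ is the number of items $i$ has picked so far, takes her most valued remaining item. Each iteration is a step; $t_i(s)$ is the number of items agent $i$ has picked in steps $1,\ldots,s$ (so $t_i(0)=0$). *)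

theory Defs
  imports Complex_Main
begin

text \<open>Number of items picked by agent i in steps 1..s, where agent pick k picks at step k+1.\<close>
definition picks :: "(nat \<Rightarrow> 'a) \<Rightarrow> 'a \<Rightarrow> nat \<Rightarrow> nat" where
  "picks pick i s = card {k. k < s \<and> pick k = i}"

text \<open>A run of the weighted picking sequence algorithm: at step k+1 (k < card M) agent pick k,
  minimising t_i/w_i over N (ties arbitrary), takes item k, a most valued remaining item.\<close>
definition wps_run :: "'a set \<Rightarrow> ('a \<Rightarrow> real) \<Rightarrow> 'b set \<Rightarrow> ('a \<Rightarrow> 'b \<Rightarrow> real)
    \<Rightarrow> (nat \<Rightarrow> 'a) \<Rightarrow> (nat \<Rightarrow> 'b) \<Rightarrow> bool" where
  "wps_run N w M u pick item \<longleftrightarrow>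
     (\<forall>k < card M.
        pick k \<in> N \<and>
        (\<forall>i\<in>N. real (picks pick (pick k) k) / w (pick k) \<le> real (picks pick i k) / w i) \<and>
        item k \<in> M - item ` {..<k} \<and>
        (\<forall>g \<in> M - item ` {..<k}. u (pick k) g \<le> u (pick k) (item k)))"

end

theory Submission
  imports Defs
begin

lemma picks_Suc: "picks pick i (Suc k) = picks pick i k + (if pick k = i then 1 else 0)"
proof -
  have e: "{k'. k' < Suc k \<and> pick k' = i} = {k'. k' < k \<and> pick k' = i} \<union> (if pick k = i then {k} else {})"
    by (auto simp: less_Suc_eq)
  show ?thesis unfolding picks_def e by (auto simp: card_insert_if)
qed

lemma picks_0[simp]: "picks pick i 0 = 0" by (simp add: picks_def)

lemma inv:
  assumes "\<And>i. i \<in> N \<Longrightarrow> w i > 0" and run: "wps_run N w M u pick item"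
  shows "s \<le> card M \<Longrightarrow> \<forall>i\<in>N. \<forall>j\<in>N.
     real (picks pick i s) / w i - real (picks pick j s) / w j \<le> 1 / w i"
proof (induction s)
  case 0
  then show ?case using assms(1) by (simp add: less_imp_le)
next
  case (Suc k)
  have k: "k < card M" using Suc by simp
  let ?p = "pick k"
  have pN: "?p \<in> N" and mn: "\<forall>i\<in>N. real (picks pick ?p k) / w ?p \<le> real (picks pick i k) / w i"
    using run k unfolding wps_run_def by auto
  have IH: "\<forall>i\<in>N. \<forall>j\<in>N. real (picks pick i k) / w i - real (picks pick j k) / w j \<le> 1 / w i"
    using Suc by simp
  show ?case
  proof (intro ballI)
    fix i j assume i: "i \<in> N" and j: "j \<in> N"
    have wi: "w i > 0" and wj: "w j > 0" using assms(1) i j by auto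
    have ai: "real (picks pick i (Suc k)) / w i = real (picks pick i k) / w i + (if ?p = i then 1 / w i else 0)"
      by (simp add: picks_Suc add_divide_distrib)
    have aj: "real (picks pick j (Suc k)) / w j = real (picks pick j k) / w j + (if ?p = j then 1 / w j else 0)"
      by (simp add: picks_Suc add_divide_distrib)
    have "0 \<le> 1 / w j" using wj by simp
    then show "real (picks pick i (Suc k)) / w i - real (picks pick j (Suc k)) / w j \<le> 1 / w i"
    proof (cases "?p = i"; cases "?p = j")
      assume "?p = i" "?p \<noteq> j"
      then show ?thesis using mn[rule_format, OF j] ai aj by auto
    next
      assume "?p \<noteq> i" "?p = j"
      moreover have "real (picks pick i k) / w i - real (picks pick j k) / w j \<le> 1 / w i"
        using IH i j by blast
      moreover have "real (picks pick i (Suc k)) / w i = real (picks pick i k) / w i"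
        using ai \<open>?p \<noteq> i\<close> by simp
      moreover have "real (picks pick j (Suc k)) / w j = real (picks pick j k) / w j + 1 / w j"
        using aj \<open>?p = j\<close> by simp
      ultimately show ?thesis using \<open>0 \<le> 1 / w j\<close> by linarith
    next
      assume "?p \<noteq> i" "?p \<noteq> j"
      moreover have "real (picks pick i (Suc k)) / w i = real (picks pick i k) / w i"
        using ai \<open>?p \<noteq> i\<close> by simp
      moreover have "real (picks pick j (Suc k)) / w j = real (picks pick j k) / w j"
        using aj \<open>?p \<noteq> j\<close> by simp
      moreover have "real (picks pick i k) / w i - real (picks pick j k) / w j \<le> 1 / w i"
        using IH i j by blast
      ultimately show ?thesis by linarith
    qed (simp add: ai aj)
  qed
qed

lemma sum_picks:
  assumes "finite N" and run: "wps_run N w M u pick item"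
  shows "s \<le> card M \<Longrightarrow> (\<Sum>j\<in>N. picks pick j s) = s"
proof (induction s)
  case 0 then show ?case by simp
next
  case (Suc k)
  have pN: "pick k \<in> N" using run Suc unfolding wps_run_def by auto
  have "(\<Sum>j\<in>N. picks pick j (Suc k)) = (\<Sum>j\<in>N. picks pick j k) + (\<Sum>j\<in>N. if pick k = j then 1 else 0)"
    by (simp add: picks_Suc sum.distrib)
  also have "(\<Sum>j\<in>N. if pick k = j then 1 else (0::nat)) = 1"
    using pN assms(1) by (simp add: sum.delta)
  finally show ?case using Suc by simp
qed

theorem lemma8:
  fixes N :: "'a set" and M :: "'b set" and w :: "'a \<Rightarrow> real"
    and u :: "'a \<Rightarrow> 'b \<Rightarrow> real" and pick :: "nat \<Rightarrow> 'a" and item :: "nat \<Rightarrow> 'b"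
  assumes "finite N" and "N \<noteq> {}" and "\<And>i. i \<in> N \<Longrightarrow> w i > 0"
    and "finite M"
    and "wps_run N w M u pick item"
  shows "(\<forall>s \<le> card M. \<forall>i\<in>N. \<forall>j\<in>N.
            \<bar>real (picks pick i s) / w i - real (picks pick j s) / w j\<bar> \<le> 1 / min (w i) (w j))
       \<and> (\<forall>s \<le> card M. \<forall>i\<in>N.
            \<bar>real (picks pick i s) - w i / (\<Sum>j\<in>N. w j) * real s\<bar> \<le> w i / Min (w ` N))"
proof -
  have P1: "\<bar>real (picks pick i s) / w i - real (picks pick j s) / w j\<bar> \<le> 1 / min (w i) (w j)"
    if s: "s \<le> card M" and i: "i \<in> N" and j: "j \<in> N" for s i j
  proof -
    have wi: "w i > 0" and wj: "w j > 0" using assms(3) i j by auto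
    have a: "real (picks pick i s) / w i - real (picks pick j s) / w j \<le> 1 / w i"
      and b: "real (picks pick j s) / w j - real (picks pick i s) / w i \<le> 1 / w j"
      using inv[OF assms(3) assms(5) s] i j by auto
    have "1 / w i \<le> 1 / min (w i) (w j)" "1 / w j \<le> 1 / min (w i) (w j)"
      using wi wj by (auto simp: frac_le min_def)
    then show ?thesis using a b by linarith
  qed
  have P2: "\<bar>real (picks pick i s) - w i / (\<Sum>j\<in>N. w j) * real s\<bar> \<le> w i / Min (w ` N)"
    if s: "s \<le> card M" and i: "i \<in> N" for s i
  proof -
    define W where "W = (\<Sum>j\<in>N. w j)"
    define m where "m = Min (w ` N)"
    define t where "t = (\<lambda>j. real (picks pick j s))"
    have wi: "w i > 0" using assms(3) i by auto
    have mpos: "m > 0" unfolding m_def using assms by (subst Min_gr_iff) auto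
    have mle: "\<And>j. j \<in> N \<Longrightarrow> m \<le> w j" unfolding m_def using assms(1) by simp
    have Wpos: "W > 0" unfolding W_def using assms by (intro sum_pos) auto
    have ss: "real s = (\<Sum>j\<in>N. t j)" unfolding t_def
      using sum_picks[OF assms(1) assms(5) s] by (metis of_nat_sum)
    have nz: "\<forall>j\<in>N. w j \<noteq> 0" using assms(3) by (metis less_irrefl)
    have eq: "t i * W - w i * real s = (\<Sum>j\<in>N. w i * w j * (t i / w i - t j / w j))"
      unfolding ss W_def using nz wi
      by (auto simp add: sum_distrib_left sum_distrib_right sum_subtractf[symmetric] algebra_simps
          intro!: sum.cong)
    have trm: "\<bar>w i * w j * (t i / w i - t j / w j)\<bar> \<le> w i * w j / m" if j: "j \<in> N" for j
    proof -
      have wj: "w j > 0" using assms(3) j by auto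
      have "\<bar>t i / w i - t j / w j\<bar> \<le> 1 / min (w i) (w j)" unfolding t_def using P1 s i j by blast
      also have "\<dots> \<le> 1 / m" using mle i j mpos by (simp add: frac_le min_def)
      finally have "\<bar>t i / w i - t j / w j\<bar> \<le> 1 / m" .
      then have "w i * w j * \<bar>t i / w i - t j / w j\<bar> \<le> w i * w j * (1 / m)"
        using wi wj by (intro mult_left_mono) auto
      then show ?thesis using wi wj by (simp add: abs_mult)
    qed
    have "\<bar>t i * W - w i * real s\<bar> \<le> (\<Sum>j\<in>N. w i * w j / m)"
      unfolding eq by (rule order_trans[OF sum_abs sum_mono[OF trm]])
    also have "\<dots> = w i * W / m" unfolding W_def
      by (simp add: sum_divide_distrib[symmetric] sum_distrib_left)
    finally have h: "\<bar>t i * W - w i * real s\<bar> \<le> w i * W / m" .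
    have "t i - w i / W * real s = (t i * W - w i * real s) / W" using Wpos by (simp add: field_simps)
    then have "\<bar>t i - w i / W * real s\<bar> = \<bar>t i * W - w i * real s\<bar> / W" using Wpos by simp
    also have "\<dots> \<le> (w i * W / m) / W" by (rule divide_right_mono[OF h]) (use Wpos in simp)
    also have "\<dots> = w i / m" using Wpos by simp
    finally show ?thesis unfolding t_def W_def m_def .
  qed
  show ?thesis using P1 P2 by blast
qed

end
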